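(* Let $X$ be a sieve-complete space and let $F\colon(\mathcal{K}(X),\tau^+_V)\to\mathcal{K}(Y)$ be upper semi-continuous and set tri-quotient. Then $Y$ is sieve-complete.
   Context: All spaces are completely regular. $\mathcal{K}(X)$ is the set of compact subsets of $X$; $\tau^+_V$ is the upper Vietoris topology on $\mathcal{K}(X)$, generated by the sets $\{H\in\mathcal{K}(X):H\subset U\}$, $U$ open in $X$. $F$ upper semi-continuous means: for every $K$ and every open $V\supset F(K)$ there is a $\tau^+_V$-neighborhood $\mathcal{O}$ of $K$ with $F(H)\subset V$ for all $H\in\mathcal{O}$. $F$ is set tri-quotient if there is $s\colon\mathcal{T}(X)\to\mathcal{T}(Y)$ (maps from open sets of $X$ to open sets of $Y$) with: (str1) $s(U)\subset\bigcup\{F(K):K\in\mathcal{K}(X),K\subset U\}$; (str2) $s(X)=Y$; (str3) $U\subset V\Rightarrow s(U)\subset s(V)$; (str4) if $y\in s(U)$ and $\mathcal{W}$ is a cover of $\bigcup\{K\in F^{-1}(y):K\subset U\}$ by open subsets of $X$, then $y\in s(\bigcup\mathcal{E})$ for some finite $\mathcal{E}\subset\mathcal{W}$, where $F^{-1}(y)=\{K:y\in F(K)\}$. A sieve on $X$ is a sequence of open covers $\{U_\alpha:\alpha\in A_n\}_{n\in\mathbb{N}}$ with maps $\pi_n\colon A_{n+1}\to A_n$ such that $U_\alpha=\bigcup\{U_\beta:\beta\in\pi_n^{-1}(\alpha)\}$; it is complete if for every sequence $(\alpha_n)$ with $\alpha_n\in A_n$, $\pi_n(\alpha_{n+1})=\alpha_n$,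 every filter base meshing with $\{U_{\alpha_n}\}$ has a cluster point; a space with a complete sieve is sieve-complete. *)

theory Defs
  imports "HOL-Analysis.Analysis"
begin

definition upper_vietoris :: "'a topology \<Rightarrow> 'a set topology" where
  "upper_vietoris X =
     topology_generated_by {{H. compactin X H \<and> H \<subseteq> U} | U. openin X U}"

definition maps_compacts :: "'a topology \<Rightarrow> 'b topology \<Rightarrow> ('a set \<Rightarrow> 'b set) \<Rightarrow> bool" where
  "maps_compacts X Y F \<longleftrightarrow> (\<forall>K. compactin X K \<longrightarrow> compactin Y (F K))"

definition usc_compact_map :: "'a topology \<Rightarrow> 'b topology \<Rightarrow> ('a set \<Rightarrow> 'b set) \<Rightarrow> bool" where
  "usc_compact_map X Y F \<longleftrightarrow>
     (\<forall>K V. compactin X K \<and> openin Y V \<and> F K \<subseteq> V \<longrightarrow>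
        (\<exists>\<O>. openin (upper_vietoris X) \<O> \<and> K \<in> \<O> \<and> (\<forall>H\<in>\<O>. F H \<subseteq> V)))"

definition set_tri_quotient :: "'a topology \<Rightarrow> 'b topology \<Rightarrow> ('a set \<Rightarrow> 'b set) \<Rightarrow> bool" where
  "set_tri_quotient X Y F \<longleftrightarrow>
     (\<exists>s :: 'a set \<Rightarrow> 'b set.
        (\<forall>U. openin X U \<longrightarrow> openin Y (s U)) \<and>
        (\<forall>U. openin X U \<longrightarrow> s U \<subseteq> \<Union>{F K | K. compactin X K \<and> K \<subseteq> U}) \<and>
        s (topspace X) = topspace Y \<and>
        (\<forall>U V. openin X U \<and> openin X V \<and> U \<subseteq> V \<longrightarrow> s U \<subseteq> s V) \<and>
        (\<forall>U y \<W>. openin X U \<and> y \<in> s U \<and> (\<forall>W\<in>\<W>. openin X W) \<and>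
            \<Union>{K. compactin X K \<and> K \<subseteq> U \<and> y \<in> F K} \<subseteq> \<Union>\<W> \<longrightarrow>
            (\<exists>\<E>. finite \<E> \<and> \<E> \<subseteq> \<W> \<and> y \<in> s (\<Union>\<E>))))"

definition filter_base_on :: "'a topology \<Rightarrow> 'a set set \<Rightarrow> bool" where
  "filter_base_on X \<B> \<longleftrightarrow>
     \<B> \<noteq> {} \<and> (\<forall>B\<in>\<B>. B \<noteq> {} \<and> B \<subseteq> topspace X) \<and>
     (\<forall>B1\<in>\<B>. \<forall>B2\<in>\<B>. \<exists>B3\<in>\<B>. B3 \<subseteq> B1 \<inter> B2)"

definition is_sieve :: "'a topology \<Rightarrow> (nat \<Rightarrow> 'i set) \<Rightarrow> (nat \<Rightarrow> 'i \<Rightarrow> 'a set)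
                         \<Rightarrow> (nat \<Rightarrow> 'i \<Rightarrow> 'i) \<Rightarrow> bool" where
  "is_sieve X A U \<pi> \<longleftrightarrow>
     (\<forall>n. \<forall>\<alpha>\<in>A n. openin X (U n \<alpha>)) \<and>
     (\<forall>n. \<Union>{U n \<alpha> | \<alpha>. \<alpha> \<in> A n} = topspace X) \<and>
     (\<forall>n. \<forall>\<beta>\<in>A (Suc n). \<pi> n \<beta> \<in> A n) \<and>
     (\<forall>n. \<forall>\<alpha>\<in>A n. U n \<alpha> = \<Union>{U (Suc n) \<beta> | \<beta>. \<beta> \<in> A (Suc n) \<and> \<pi> n \<beta> = \<alpha>})"

definition is_complete_sieve :: "'a topology \<Rightarrow> (nat \<Rightarrow> 'i set) \<Rightarrow> (nat \<Rightarrow> 'i \<Rightarrow> 'a set)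
                         \<Rightarrow> (nat \<Rightarrow> 'i \<Rightarrow> 'i) \<Rightarrow> bool" where
  "is_complete_sieve X A U \<pi> \<longleftrightarrow>
     is_sieve X A U \<pi> \<and>
     (\<forall>\<alpha>. (\<forall>n. \<alpha> n \<in> A n \<and> \<pi> n (\<alpha> (Suc n)) = \<alpha> n) \<longrightarrow>
        (\<forall>\<B>. filter_base_on X \<B> \<and> (\<forall>B\<in>\<B>. \<forall>n. B \<inter> U n (\<alpha> n) \<noteq> {}) \<longrightarrow>
           (\<exists>x\<in>topspace X. \<forall>B\<in>\<B>. x \<in> X closure_of B)))"

text \<open>Sieve-completeness.  The index sets are taken inside the type of finite lists of
  subsets of the space; this is no loss of generality.\<close>
definition sieve_complete :: "'a topology \<Rightarrow> bool" where
  "sieve_complete X \<longleftrightarrow>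
     (\<exists>(A :: nat \<Rightarrow> 'a set list set) U \<pi>. is_complete_sieve X A U \<pi>)"

end

theory Submission
  imports Defs
begin


lemma fb_lower:
  assumes "filter_base_on X \<B>" "finite I" "\<forall>i\<in>I. f i \<in> \<B>"
  shows "\<exists>B\<in>\<B>. \<forall>i\<in>I. B \<subseteq> f i"
  using assms(2,3)
proof (induction I rule: finite_induct)
  case empty then show ?case using assms(1) unfolding filter_base_on_def by auto
next
  case (insert i I)
  then obtain B where B: "B\<in>\<B>" "\<forall>j\<in>I. B \<subseteq> f j" by auto
  moreover from insert have "f i \<in> \<B>" by auto
  ultimately obtain B3 where "B3\<in>\<B>" "B3 \<subseteq> f i \<inter> B" using assms(1) unfolding filter_base_on_def by meson
  then show ?case using B by blast
qed

fun up :: "(nat \<Rightarrow> 'i \<Rightarrow> 'i) \<Rightarrow> nat \<Rightarrow> nat \<Rightarrow> 'i \<Rightarrow> 'i" where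
  "up \<pi> 0 n b = b" | "up \<pi> (Suc k) n b = \<pi> n (up \<pi> k (Suc n) b)"

lemma up_S:
  assumes "\<And>n b. b \<in> S (Suc n) \<Longrightarrow> \<pi> n b \<in> S n"
  shows "b \<in> S (n+k) \<Longrightarrow> up \<pi> k n b \<in> S n"
proof (induction k arbitrary: n)
  case 0 then show ?case by simp
next
  case (Suc k)
  then have "up \<pi> k (Suc n) b \<in> S (Suc n)" by (metis add_Suc add_Suc_right)
  then show ?case using assms by simp
qed

lemma koenig:
  assumes fin: "\<And>n. finite (S n)" and ne: "\<And>n. S n \<noteq> {}"
    and par: "\<And>n b. b \<in> S (Suc n) \<Longrightarrow> \<pi> n b \<in> S n"
  shows "\<exists>\<alpha>. \<forall>n. \<alpha> n \<in> S n \<and> \<pi> n (\<alpha> (Suc n)) = \<alpha> n"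
proof -
  define b where "b m = (SOME x. x \<in> S m)" for m
  have bS: "b m \<in> S m" for m using ne[of m] unfolding b_def by (simp add: some_in_eq)
  define g where "g n m = up \<pi> (m - n) n (b m)" for n m
  have gS: "n \<le> m \<Longrightarrow> g n m \<in> S n" for n m
    unfolding g_def using up_S[of S \<pi>, OF par, of "b m" n "m-n"] bS[of m] by simp
  have gpar: "Suc n \<le> m \<Longrightarrow> \<pi> n (g (Suc n) m) = g n m" for n m
  proof -
    assume "Suc n \<le> m"
    then have "m - n = Suc (m - Suc n)" by simp
    then show ?thesis unfolding g_def by simp
  qed
  define P where "P n p \<longleftrightarrow> infinite (fst p) \<and> fst p \<subseteq> {n..} \<and> (\<forall>m\<in>fst p. g n m = snd p)" for n p
  have step: "\<exists>I' v'. I' \<subseteq> I \<and> infinite I' \<and> I' \<subseteq> {k..} \<and> (\<forall>m\<in>I'. g k m = v')"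
    if "infinite I" for I k
  proof -
    have J: "infinite (I \<inter> {k..})"
    proof
      assume "finite (I \<inter> {k..})"
      moreover have "I \<subseteq> (I \<inter> {k..}) \<union> {..<k}" by auto
      ultimately show False using that finite_subset by blast
    qed
    have "g k ` (I \<inter> {k..}) \<subseteq> S k" using gS by auto
    then have "finite (g k ` (I \<inter> {k..}))" using fin finite_subset by blast
    from pigeonhole_infinite[OF J this] obtain m0 where
      m0: "m0 \<in> I \<inter> {k..}" "infinite {m \<in> I \<inter> {k..}. g k m = g k m0}" by blast
    then show ?thesis by (intro exI[of _ "{m \<in> I \<inter> {k..}. g k m = g k m0}"] exI[of _ "g k m0"]) auto
  qed
  have "\<exists>f. \<forall>n. P n (f n) \<and> (fst (f (Suc n)) \<subseteq> fst (f n) \<and> \<pi> n (snd (f (Suc n))) = snd (f n))"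
  proof (rule dependent_nat_choice)
    show "\<exists>x. P 0 x" using step[of UNIV 0] unfolding P_def by auto
  next
    fix x n assume Px: "P n x"
    then obtain I' v' where I': "I' \<subseteq> fst x" "infinite I'" "I' \<subseteq> {Suc n..}" "\<forall>m\<in>I'. g (Suc n) m = v'"
      using step[of "fst x" "Suc n"] unfolding P_def by blast
    then obtain m where m: "m \<in> I'" using infinite_imp_nonempty by blast
    have "m \<in> fst x" "Suc n \<le> m" using I' m by auto
    then have "\<pi> n v' = snd x"
      using I' m Px gpar[of n m] unfolding P_def by auto
    then show "\<exists>y. P (Suc n) y \<and> fst y \<subseteq> fst x \<and> \<pi> n (snd y) = snd x"
      using I' unfolding P_def by (intro exI[of _ "(I', v')"]) auto
  qed
  then obtain f where f: "\<And>n. P n (f n)" "\<And>n. \<pi> n (snd (f (Suc n))) = snd (f n)" by blast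
  have "snd (f n) \<in> S n" for n
  proof -
    obtain m where "m \<in> fst (f n)" using f(1)[of n] infinite_imp_nonempty unfolding P_def by blast
    then show ?thesis using f(1)[of n] gS[of n m] unfolding P_def by auto
  qed
  then show ?thesis using f(2) by (intro exI[of _ "\<lambda>n. snd (f n)"]) auto
qed

lemma uv_nbhd:
  assumes "openin (upper_vietoris X) \<O>" "compactin X K" "K \<in> \<O>"
  shows "\<exists>G. openin X G \<and> K \<subseteq> G \<and> (\<forall>H. compactin X H \<and> H \<subseteq> G \<longrightarrow> H \<in> \<O>)"
proof -
  have "generate_topology_on {{H. compactin X H \<and> H \<subseteq> U} | U. openin X U} \<O>"
    using assms(1) unfolding upper_vietoris_def by (rule openin_topology_generated_by)
  then show ?thesis using assms(2,3)
  proof (induction arbitrary: K rule: generate_topology_on.induct)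
    case Empty then show ?case by simp
  next
    case (Int a b)
    from Int.prems have "K \<in> a" "K \<in> b" by auto
    from Int.IH(1)[OF Int.prems(1) this(1)] obtain G1 where
      G1: "openin X G1" "K \<subseteq> G1" "\<forall>H. compactin X H \<and> H \<subseteq> G1 \<longrightarrow> H \<in> a" by blast
    from Int.IH(2)[OF Int.prems(1) \<open>K \<in> b\<close>] obtain G2 where
      G2: "openin X G2" "K \<subseteq> G2" "\<forall>H. compactin X H \<and> H \<subseteq> G2 \<longrightarrow> H \<in> b" by blast
    have "openin X (G1 \<inter> G2)" using G1 G2 by blast
    moreover have "\<forall>H. compactin X H \<and> H \<subseteq> G1 \<inter> G2 \<longrightarrow> H \<in> a \<inter> b" using G1(3) G2(3) by blast
    ultimately show ?case using G1(2) G2(2) by blast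
  next
    case (UN KK)
    then obtain k where k: "k \<in> KK" "K \<in> k" by blast
    from UN.IH[OF k(1) UN.prems(1) k(2)] obtain G where
      "openin X G" "K \<subseteq> G" "\<forall>H. compactin X H \<and> H \<subseteq> G \<longrightarrow> H \<in> k" by blast
    then show ?case using k(1) by blast
  next
    case (Basis s)
    then obtain V where V: "s = {H. compactin X H \<and> H \<subseteq> V}" "openin X V" by blast
    then show ?case using Basis.prems by (intro exI[of _ V]) auto
  qed
qed



locale tq =
  fixes X :: "'a topology" and Y :: "'b topology" and F :: "'a set \<Rightarrow> 'b set"
    and A :: "nat \<Rightarrow> 'i set" and U :: "nat \<Rightarrow> 'i \<Rightarrow> 'a set" and \<pi> :: "nat \<Rightarrow> 'i \<Rightarrow> 'i"
    and s :: "'a set \<Rightarrow> 'b set"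
  assumes reg: "regular_space X" and cs: "is_complete_sieve X A U \<pi>"
    and mc: "maps_compacts X Y F" and usc: "usc_compact_map X Y F"
    and s0: "\<And>V. openin X V \<Longrightarrow> openin Y (s V)"
    and s1: "\<And>V. openin X V \<Longrightarrow> s V \<subseteq> \<Union>{F K | K. compactin X K \<and> K \<subseteq> V}"
    and s2: "s (topspace X) = topspace Y"
    and s3: "\<And>V W. openin X V \<Longrightarrow> openin X W \<Longrightarrow> V \<subseteq> W \<Longrightarrow> s V \<subseteq> s W"
    and s4: "\<And>V y \<W>. openin X V \<Longrightarrow> y \<in> s V \<Longrightarrow> (\<forall>W\<in>\<W>. openin X W) \<Longrightarrow>
              \<Union>{K. compactin X K \<and> K \<subseteq> V \<and> y \<in> F K} \<subseteq> \<Union>\<W> \<Longrightarrow>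
              \<exists>\<E>. finite \<E> \<and> \<E> \<subseteq> \<W> \<and> y \<in> s (\<Union>\<E>)"
begin

lemma sv: "is_sieve X A U \<pi>" using cs unfolding is_complete_sieve_def by (rule conjunct1)
lemma P1: "\<forall>n. \<forall>\<alpha>\<in>A n. openin X (U n \<alpha>)"
  using sv unfolding is_sieve_def by (rule conjunct1)
lemma P2: "\<forall>n. \<Union>{U n \<alpha> | \<alpha>. \<alpha> \<in> A n} = topspace X"
  using sv unfolding is_sieve_def by (rule conjunct2[THEN conjunct1])
lemma P3: "\<forall>n. \<forall>\<beta>\<in>A (Suc n). \<pi> n \<beta> \<in> A n"
  using sv unfolding is_sieve_def by (rule conjunct2[THEN conjunct2, THEN conjunct1])
lemma P4: "\<forall>n. \<forall>\<alpha>\<in>A n. U n \<alpha> = \<Union>{U (Suc n) \<beta> | \<beta>. \<beta> \<in> A (Suc n) \<and> \<pi> n \<beta> = \<alpha>}"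
  using sv unfolding is_sieve_def by (rule conjunct2[THEN conjunct2, THEN conjunct2])
lemma Uopen: "\<alpha> \<in> A n \<Longrightarrow> openin X (U n \<alpha>)"
  by (rule bspec[OF spec[OF P1]])
lemma Ucover: "\<Union>{U n \<alpha> | \<alpha>. \<alpha> \<in> A n} = topspace X"
  by (rule spec[OF P2])
lemma \<pi>A: "\<beta> \<in> A (Suc n) \<Longrightarrow> \<pi> n \<beta> \<in> A n"
  by (rule bspec[OF spec[OF P3]])
lemma Uunion: "\<alpha> \<in> A n \<Longrightarrow> U n \<alpha> = \<Union>{U (Suc n) \<beta> | \<beta>. \<beta> \<in> A (Suc n) \<and> \<pi> n \<beta> = \<alpha>}"
  by (rule bspec[OF spec[OF P4]])
lemma Usub: "\<beta> \<in> A (Suc n) \<Longrightarrow> U (Suc n) \<beta> \<subseteq> U n (\<pi> n \<beta>)"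
proof -
  assume b: "\<beta> \<in> A (Suc n)"
  have "U (Suc n) \<beta> \<subseteq> \<Union>{U (Suc n) \<beta>' | \<beta>'. \<beta>' \<in> A (Suc n) \<and> \<pi> n \<beta>' = \<pi> n \<beta>}"
    using b by blast
  then show ?thesis using Uunion[OF \<pi>A[OF b]] by simp
qed
lemma complete: "(\<forall>n. \<alpha> n \<in> A n \<and> \<pi> n (\<alpha> (Suc n)) = \<alpha> n) \<Longrightarrow> filter_base_on X \<B> \<Longrightarrow>
   (\<forall>B\<in>\<B>. \<forall>n. B \<inter> U n (\<alpha> n) \<noteq> {}) \<Longrightarrow> \<exists>x\<in>topspace X. \<forall>B\<in>\<B>. x \<in> X closure_of B"
  using cs unfolding is_complete_sieve_def by blast

definition UU :: "nat \<Rightarrow> 'i set \<Rightarrow> 'a set" where "UU n E = \<Union>(U n ` E)"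

lemma UU_open: "E \<subseteq> A n \<Longrightarrow> openin X (UU n E)"
  unfolding UU_def using Uopen by (intro openin_Union) auto

definition ft :: "(nat \<Rightarrow> 'i set) \<Rightarrow> bool" where
  "ft E \<longleftrightarrow> (\<forall>n. finite (E n) \<and> E n \<subseteq> A n \<and> (\<forall>\<beta>\<in>E (Suc n). \<pi> n \<beta> \<in> E n))"

lemma UU_dec: "ft E \<Longrightarrow> UU (Suc n) (E (Suc n)) \<subseteq> UU n (E n)"
proof
  fix x assume E: "ft E" and "x \<in> UU (Suc n) (E (Suc n))"
  then obtain \<beta> where b: "\<beta> \<in> E (Suc n)" "x \<in> U (Suc n) \<beta>" unfolding UU_def by blast
  have "\<beta> \<in> A (Suc n)" "\<pi> n \<beta> \<in> E n" using E b(1) unfolding ft_def by blast+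
  then have "x \<in> U n (\<pi> n \<beta>)" using Usub b(2) by blast
  then show "x \<in> UU n (E n)" unfolding UU_def using \<open>\<pi> n \<beta> \<in> E n\<close> by blast
qed

lemma UU_mono: "ft E \<Longrightarrow> n \<le> m \<Longrightarrow> UU m (E m) \<subseteq> UU n (E n)"
  by (rule lift_Suc_antimono_le[of "\<lambda>n. UU n (E n)", OF UU_dec])

lemma UU_top: "ft E \<Longrightarrow> UU n (E n) \<subseteq> topspace X"
proof -
  assume "ft E"
  then have "E n \<subseteq> A n" unfolding ft_def by blast
  then show ?thesis by (rule openin_subset[OF UU_open])
qed

lemma cluster:
  assumes E: "ft E" and fb: "filter_base_on X \<M>" and mesh: "\<forall>M\<in>\<M>. \<forall>n. M \<inter> UU n (E n) \<noteq> {}"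
  shows "\<exists>x\<in>topspace X. \<forall>M\<in>\<M>. x \<in> X closure_of M"
proof -
  define S where "S n = {\<alpha> \<in> E n. \<forall>M\<in>\<M>. M \<inter> U n \<alpha> \<noteq> {}}" for n
  have fin: "finite (S n)" for n using E unfolding ft_def S_def by auto
  have ne: "S n \<noteq> {}" for n
  proof
    assume "S n = {}"
    then have "\<forall>\<alpha>\<in>E n. \<exists>M\<in>\<M>. M \<inter> U n \<alpha> = {}" unfolding S_def by blast
    then obtain f where f: "\<forall>\<alpha>\<in>E n. f \<alpha> \<in> \<M> \<and> f \<alpha> \<inter> U n \<alpha> = {}" by metis
    then obtain M where M: "M \<in> \<M>" "\<forall>\<alpha>\<in>E n. M \<subseteq> f \<alpha>"
      using fb_lower[OF fb, of "E n" f] E unfolding ft_def by blast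
    then have "M \<inter> UU n (E n) = {}" using f unfolding UU_def by blast
    then show False using mesh M by blast
  qed
  have par: "\<beta> \<in> S (Suc n) \<Longrightarrow> \<pi> n \<beta> \<in> S n" for n \<beta>
  proof -
    assume b: "\<beta> \<in> S (Suc n)"
    then have "\<beta> \<in> A (Suc n)" "\<pi> n \<beta> \<in> E n" using E unfolding S_def ft_def by blast+
    then show ?thesis using b Usub[of \<beta> n] unfolding S_def by blast
  qed
  obtain \<alpha> where \<alpha>: "\<forall>n. \<alpha> n \<in> S n \<and> \<pi> n (\<alpha> (Suc n)) = \<alpha> n"
    using koenig[of S \<pi>, OF fin ne par] by blast
  have "\<forall>n. \<alpha> n \<in> A n \<and> \<pi> n (\<alpha> (Suc n)) = \<alpha> n" using \<alpha> E unfolding S_def ft_def by blast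
  moreover have "\<forall>M\<in>\<M>. \<forall>n. M \<inter> U n (\<alpha> n) \<noteq> {}" using \<alpha> unfolding S_def by blast
  ultimately show ?thesis using complete fb by blast
qed

definition Q :: "(nat \<Rightarrow> 'i set) \<Rightarrow> 'a set" where
  "Q E = topspace X \<inter> (\<Inter>n. X closure_of UU n (E n))"

lemma network:
  assumes E: "ft E" and G: "openin X G" "Q E \<subseteq> G"
  shows "\<exists>n. UU n (E n) \<subseteq> G"
proof (rule ccontr)
  assume "\<not> ?thesis"
  then have nz: "UU n (E n) - G \<noteq> {}" for n by blast
  define \<M> where "\<M> = range (\<lambda>n. UU n (E n) - G)"
  have fb: "filter_base_on X \<M>"
    unfolding filter_base_on_def
  proof (intro conjI)
    show "\<M> \<noteq> {}" unfolding \<M>_def by blast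
  next
    show "\<forall>B\<in>\<M>. B \<noteq> {} \<and> B \<subseteq> topspace X"
      unfolding \<M>_def using nz UU_top[OF E] by blast
  next
    show "\<forall>B1\<in>\<M>. \<forall>B2\<in>\<M>. \<exists>B3\<in>\<M>. B3 \<subseteq> B1 \<inter> B2"
    proof (intro ballI)
    fix B1 B2 assume "B1 \<in> \<M>" "B2 \<in> \<M>"
    then obtain n m where "B1 = UU n (E n) - G" "B2 = UU m (E m) - G" unfolding \<M>_def by blast
    then have "UU (max n m) (E (max n m)) - G \<subseteq> B1 \<inter> B2" using UU_mono[OF E, of n "max n m"] UU_mono[OF E, of m "max n m"] by auto
    then show "\<exists>B3\<in>\<M>. B3 \<subseteq> B1 \<inter> B2" unfolding \<M>_def by blast
    qed
  qed
  have mesh: "\<forall>M\<in>\<M>. \<forall>n. M \<inter> UU n (E n) \<noteq> {}"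
  proof (intro ballI allI)
    fix M n assume "M \<in> \<M>"
    then obtain m where m: "M = UU m (E m) - G" unfolding \<M>_def by blast
    have "UU (max n m) (E (max n m)) - G \<subseteq> M \<inter> UU n (E n)" unfolding m using UU_mono[OF E, of n "max n m"] UU_mono[OF E, of m "max n m"] by auto
    then show "M \<inter> UU n (E n) \<noteq> {}" using nz by blast
  qed
  obtain x where x: "x \<in> topspace X" "\<forall>M\<in>\<M>. x \<in> X closure_of M" using cluster[OF E fb mesh] by blast
  have xn: "x \<in> X closure_of (UU n (E n) - G)" for n using x(2) unfolding \<M>_def by simp
  have "x \<in> X closure_of UU n (E n)" for n
    using xn[of n] closure_of_mono[of "UU n (E n) - G" "UU n (E n)" X] by blast
  then have xG: "x \<in> G" using x(1) G(2) unfolding Q_def by blast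
  have "\<forall>T. x \<in> T \<and> openin X T \<longrightarrow> (\<exists>y. y \<in> UU 0 (E 0) - G \<and> y \<in> T)"
    using xn[of 0] by (simp add: in_closure_of)
  then have "\<exists>y. y \<in> UU 0 (E 0) - G \<and> y \<in> G" using xG G(1) by blast
  then show False by blast
qed

lemma Q_compact:
  assumes E: "ft E" shows "compactin X (Q E)"
  unfolding compactin_def
proof (intro conjI allI impI)
  show "Q E \<subseteq> topspace X" unfolding Q_def by blast
next
  fix \<W> assume W: "(\<forall>W\<in>\<W>. openin X W) \<and> Q E \<subseteq> \<Union>\<W>"
  show "\<exists>\<F>. finite \<F> \<and> \<F> \<subseteq> \<W> \<and> Q E \<subseteq> \<Union>\<F>"
  proof (rule ccontr)
    assume nf: "\<not> ?thesis"
    define \<M> where "\<M> = {O' \<inter> UU n (E n) | O' n. openin X O' \<and>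
         (\<exists>\<E>. finite \<E> \<and> \<E> \<subseteq> \<W> \<and> Q E - \<Union>\<E> \<subseteq> O')}"
    have key: "O' \<inter> UU n (E n) \<noteq> {}" if hh: "openin X O'" "finite \<E>" "\<E> \<subseteq> \<W>" "Q E - \<Union>\<E> \<subseteq> O'" for O' n \<E>
    proof -
      obtain z where z: "z \<in> Q E - \<Union>\<E>" using nf hh(2,3) by blast
      then have zc: "z \<in> X closure_of UU n (E n)" and "z \<in> O'" using hh(4) unfolding Q_def by blast+
      then have "\<exists>y. y \<in> UU n (E n) \<and> y \<in> O'" using hh(1) zc unfolding in_closure_of by blast
      then show ?thesis by blast
    qed
    have memM: "O' \<inter> UU n (E n) \<in> \<M>" if "openin X O'" "finite \<E>" "\<E> \<subseteq> \<W>" "Q E - \<Union>\<E> \<subseteq> O'" for O' n \<E>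
    proof -
      have "\<exists>O'' n'. O' \<inter> UU n (E n) = O'' \<inter> UU n' (E n') \<and> openin X O'' \<and> (\<exists>\<E>. finite \<E> \<and> \<E> \<subseteq> \<W> \<and> Q E - \<Union>\<E> \<subseteq> O'')"
        using that by (intro exI[of _ O'] exI[of _ n] conjI refl) (auto intro!: exI[of _ \<E>])
      then show ?thesis unfolding \<M>_def mem_Collect_eq .
    qed
    have top_in: "\<exists>O' n'. topspace X \<inter> UU n (E n) = O' \<inter> UU n' (E n') \<and> openin X O' \<and>
         (\<exists>\<E>. finite \<E> \<and> \<E> \<subseteq> \<W> \<and> Q E - \<Union>\<E> \<subseteq> O')" for n
    proof (intro exI conjI)
      show "topspace X \<inter> UU n (E n) = topspace X \<inter> UU n (E n)" by (rule refl)
      show "openin X (topspace X)" by simp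
      show "finite {}" "{} \<subseteq> \<W>" by auto
      show "Q E - \<Union>{} \<subseteq> topspace X" unfolding Q_def by blast
    qed
    have fb: "filter_base_on X \<M>"
      unfolding filter_base_on_def
    proof (intro conjI)
      have "topspace X \<inter> UU 0 (E 0) \<in> \<M>" unfolding \<M>_def using top_in by blast
      then show "\<M> \<noteq> {}" by blast
    next
      show "\<forall>B\<in>\<M>. B \<noteq> {} \<and> B \<subseteq> topspace X"
      proof
        fix B assume "B \<in> \<M>"
        then obtain O' m \<E> where m: "B = O' \<inter> UU m (E m)" "openin X O'" "finite \<E>" "\<E> \<subseteq> \<W>" "Q E - \<Union>\<E> \<subseteq> O'"
          unfolding \<M>_def by blast
        have "B \<noteq> {}" using key[OF m(2-5), of m] m(1) by simp
        moreover have "O' \<subseteq> topspace X" using m(2) by (rule openin_subset)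
        ultimately show "B \<noteq> {} \<and> B \<subseteq> topspace X" using m(1) by blast
      qed
    next
      show "\<forall>B1\<in>\<M>. \<forall>B2\<in>\<M>. \<exists>B3\<in>\<M>. B3 \<subseteq> B1 \<inter> B2"
      proof (intro ballI)
      fix B1 B2 assume "B1 \<in> \<M>" "B2 \<in> \<M>"
      then obtain O1 n1 \<E>1 O2 n2 \<E>2 where B: "B1 = O1 \<inter> UU n1 (E n1)" "openin X O1" "finite \<E>1" "\<E>1 \<subseteq> \<W>" "Q E - \<Union>\<E>1 \<subseteq> O1"
        "B2 = O2 \<inter> UU n2 (E n2)" "openin X O2" "finite \<E>2" "\<E>2 \<subseteq> \<W>" "Q E - \<Union>\<E>2 \<subseteq> O2"
        unfolding \<M>_def by blast
      have "Q E - \<Union>(\<E>1 \<union> \<E>2) \<subseteq> O1 \<inter> O2" using B(5,10) by blast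
      moreover have "openin X (O1 \<inter> O2)" using B(2,7) by (rule openin_Int)
      ultimately have "(O1 \<inter> O2) \<inter> UU (max n1 n2) (E (max n1 n2)) \<in> \<M>"
        using memM[of "O1 \<inter> O2" "\<E>1 \<union> \<E>2"] B(3,4,8,9) by blast
      moreover have "(O1 \<inter> O2) \<inter> UU (max n1 n2) (E (max n1 n2)) \<subseteq> B1 \<inter> B2"
        using B(1,6) UU_mono[OF E, of n1 "max n1 n2"] UU_mono[OF E, of n2 "max n1 n2"] by auto
      ultimately show "\<exists>B3\<in>\<M>. B3 \<subseteq> B1 \<inter> B2" by blast
      qed
    qed
    have mesh: "\<forall>M\<in>\<M>. \<forall>n. M \<inter> UU n (E n) \<noteq> {}"
    proof (intro ballI allI)
      fix M n assume "M \<in> \<M>"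
      then obtain O' m \<E> where m: "M = O' \<inter> UU m (E m)" "openin X O'" "finite \<E>" "\<E> \<subseteq> \<W>" "Q E - \<Union>\<E> \<subseteq> O'"
        unfolding \<M>_def by blast
      have "O' \<inter> UU (max n m) (E (max n m)) \<subseteq> M \<inter> UU n (E n)"
        unfolding m using UU_mono[OF E, of n "max n m"] UU_mono[OF E, of m "max n m"] by auto
      then show "M \<inter> UU n (E n) \<noteq> {}" using key[OF m(2-5), of "max n m"] by blast
    qed
    obtain x where x: "x \<in> topspace X" "\<forall>M\<in>\<M>. x \<in> X closure_of M" using cluster[OF E fb mesh] by blast
    have inM: "O' \<inter> UU n (E n) \<in> \<M>" if "openin X O'" "Q E - W \<subseteq> O'" "W \<in> \<W>" for O' n W
      using memM[of O' "{W}" n] that by simp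
    have "x \<in> X closure_of UU n (E n)" for n
    proof -
      have "topspace X \<inter> UU n (E n) \<in> \<M>" using top_in[of n] unfolding \<M>_def by blast
      then have "x \<in> X closure_of (topspace X \<inter> UU n (E n))" using x(2) by blast
      then show ?thesis using closure_of_mono[of "topspace X \<inter> UU n (E n)" "UU n (E n)" X] by blast
    qed
    then have "x \<in> Q E" using x(1) unfolding Q_def by blast
    then obtain W0 where W0: "W0 \<in> \<W>" "x \<in> W0" using W by blast
    have "openin X W0" using W W0 by blast
    then have "closedin X (topspace X - W0)" by (intro closedin_diff) auto
    moreover have "x \<in> topspace X - (topspace X - W0)" using W0(2) x(1) by blast
    ultimately have "\<exists>N. openin X N \<and> x \<in> N \<and> disjnt (topspace X - W0) (X closure_of N)"
      using reg[unfolded regular_space, rule_format, of "topspace X - W0" x] by blast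
    then obtain N where N: "openin X N" "x \<in> N" "disjnt (topspace X - W0) (X closure_of N)"
      by blast
    have cN: "X closure_of N \<subseteq> W0"
      using N(3) closure_of_subset_topspace[of X N] unfolding disjnt_def by blast
    define O' where "O' = topspace X - X closure_of N"
    have oO: "openin X O'" unfolding O'_def by (intro openin_diff) auto
    have "Q E - W0 \<subseteq> O'" unfolding O'_def Q_def using cN by blast
    then have "x \<in> X closure_of (O' \<inter> UU 0 (E 0))" using x(2) inM[OF oO _ W0(1)] by blast
    then have "\<forall>T. x \<in> T \<and> openin X T \<longrightarrow> (\<exists>y. y \<in> O' \<inter> UU 0 (E 0) \<and> y \<in> T)"
      by (simp add: in_closure_of)
    then obtain y where y: "y \<in> O' \<inter> UU 0 (E 0)" "y \<in> N" using N(1,2) by blast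
    have "N \<subseteq> X closure_of N" by (rule closure_of_subset[OF openin_subset[OF N(1)]])
    then have "y \<in> X closure_of N" using y(2) by blast
    then show False using y(1) unfolding O'_def by blast
  qed
qed

lemma mainY:
  assumes E: "ft E" and fb: "filter_base_on Y \<B>"
    and mesh: "\<forall>B\<in>\<B>. \<forall>n. B \<inter> s (UU n (E n)) \<noteq> {}"
  shows "\<exists>y\<in>topspace Y. \<forall>B\<in>\<B>. y \<in> Y closure_of B"
proof (rule ccontr)
  assume nc: "\<not> ?thesis"
  have h1: "\<forall>y\<in>topspace Y. \<exists>B. B \<in> \<B> \<and> (\<exists>W. openin Y W \<and> y \<in> W \<and> W \<inter> B = {})"
  proof
    fix y assume y: "y \<in> topspace Y"
    then obtain B where B: "B \<in> \<B>" "y \<notin> Y closure_of B" using nc by blast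
    then have "\<not> (\<forall>T. y \<in> T \<and> openin Y T \<longrightarrow> (\<exists>z. z \<in> B \<and> z \<in> T))" using y by (simp add: in_closure_of)
    then show "\<exists>B. B \<in> \<B> \<and> (\<exists>W. openin Y W \<and> y \<in> W \<and> W \<inter> B = {})" using B(1) by blast
  qed
  from bchoice[OF h1] obtain Bf where h2: "\<forall>y\<in>topspace Y. Bf y \<in> \<B> \<and> (\<exists>W. openin Y W \<and> y \<in> W \<and> W \<inter> Bf y = {})"
    by blast
  have h2': "\<forall>y\<in>topspace Y. \<exists>W. openin Y W \<and> y \<in> W \<and> W \<inter> Bf y = {}" using h2 by blast
  from bchoice[OF h2'] obtain Wf where
    h3: "\<forall>y\<in>topspace Y. openin Y (Wf y) \<and> y \<in> Wf y \<and> Wf y \<inter> Bf y = {}"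
    by blast
  have cQ: "compactin X (Q E)" by (rule Q_compact[OF E])
  have cFQ: "compactin Y (F (Q E))" using mc cQ unfolding maps_compacts_def by blast
  then have FQt: "F (Q E) \<subseteq> topspace Y" by (rule compactin_subset_topspace)
  have c1: "\<forall>W\<in>Wf ` F (Q E). openin Y W" using h3 FQt by blast
  have c2: "F (Q E) \<subseteq> \<Union>(Wf ` F (Q E))" using h3 FQt by blast
  have "\<exists>\<F>. finite \<F> \<and> \<F> \<subseteq> Wf ` F (Q E) \<and> F (Q E) \<subseteq> \<Union>\<F>"
    using cFQ[unfolded compactin_def, THEN conjunct2, rule_format, OF conjI[OF c1 c2]] .
  then obtain \<F> where \<F>: "finite \<F>" "\<F> \<subseteq> Wf ` F (Q E)" "F (Q E) \<subseteq> \<Union>\<F>" by blast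
  then obtain T where T: "T \<subseteq> F (Q E)" "finite T" "\<F> = Wf ` T" by (meson finite_subset_image)
  have TB: "\<forall>i\<in>T. Bf i \<in> \<B>" using h2 T(1) FQt by blast
  obtain B0 where B0: "B0 \<in> \<B>" "\<forall>y\<in>T. B0 \<subseteq> Bf y"
    using fb_lower[OF fb T(2) TB] by blast
  define W where "W = \<Union>(Wf ` T)"
  have "\<forall>V\<in>Wf ` T. openin Y V" using h3 T(1) FQt by blast
  then have oW: "openin Y W" unfolding W_def by (intro openin_Union) blast
  have "F (Q E) \<subseteq> W" using \<F>(3) T(3) unfolding W_def by simp
  then obtain \<O> where O: "openin (upper_vietoris X) \<O>" "Q E \<in> \<O>" "\<forall>H\<in>\<O>. F H \<subseteq> W"
    using usc[unfolded usc_compact_map_def, rule_format, OF conjI[OF cQ conjI[OF oW]]] by blast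
  obtain G where G: "openin X G" "Q E \<subseteq> G" "\<forall>H. compactin X H \<and> H \<subseteq> G \<longrightarrow> H \<in> \<O>"
    using uv_nbhd[OF O(1) cQ O(2)] by blast
  obtain n where n: "UU n (E n) \<subseteq> G" using network[OF E G(1,2)] by blast
  have "B0 \<inter> s (UU n (E n)) \<noteq> {}" using mesh B0(1) by blast
  then obtain y0 where y0: "y0 \<in> B0" "y0 \<in> s (UU n (E n))" by blast
  have "E n \<subseteq> A n" using E unfolding ft_def by blast
  then have oU: "openin X (UU n (E n))" by (rule UU_open)
  have "y0 \<in> \<Union>{F K | K. compactin X K \<and> K \<subseteq> UU n (E n)}" using s1[OF oU] y0(2) by blast
  then obtain K where K: "compactin X K" "K \<subseteq> UU n (E n)" "y0 \<in> F K" by blast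
  then have "K \<in> \<O>" using G(3) n by blast
  then have "y0 \<in> W" using O(3) K(3) by blast
  then obtain y where y: "y \<in> T" "y0 \<in> Wf y" unfolding W_def by blast
  then have "y \<in> topspace Y" using T(1) FQt by blast
  then have "Wf y \<inter> Bf y = {}" using h3 by blast
  moreover have "y0 \<in> Bf y" using B0(2) y(1) y0(1) by blast
  ultimately show False using y(2) by blast
qed

end



context tq
begin

definition ok :: "'i set list \<Rightarrow> 'i set \<Rightarrow> bool" where
  "ok p E \<longleftrightarrow> finite E \<and> E \<subseteq> A (length p) \<and> (p \<noteq> [] \<longrightarrow> (\<forall>\<beta>\<in>E. \<pi> (length p - 1) \<beta> \<in> last p))"

definition VV :: "nat \<Rightarrow> 'i set \<Rightarrow> 'b set" where "VV n E = s (UU n E)"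

definition thr :: "'i set list \<Rightarrow> bool" where "thr e \<longleftrightarrow> (\<forall>i<length e. ok (take i e) (e!i))"

definition canon :: "'i set list \<Rightarrow> bool" where
  "canon e \<longleftrightarrow> (\<forall>i<length e. e!i = (SOME E. ok (take i e) E \<and> VV i E = VV i (e!i)))"

definition vl :: "'i set list \<Rightarrow> 'b set list" where "vl e = map (\<lambda>i. VV i (e!i)) [0..<length e]"

definition A' :: "nat \<Rightarrow> 'b set list set" where
  "A' n = {vl e | e. length e = Suc n \<and> thr e \<and> canon e}"

lemma thr_A: "thr e \<Longrightarrow> i < length e \<Longrightarrow> finite (e!i) \<and> e!i \<subseteq> A i"
proof -
  assume t: "thr e" and i: "i < length e"
  have "ok (take i e) (e!i)" using t i unfolding thr_def by simp
  then have "finite (e!i) \<and> e!i \<subseteq> A (length (take i e))" unfolding ok_def by blast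
  moreover have "length (take i e) = i" using i by simp
  ultimately show ?thesis by simp
qed

lemma thr_open: "thr e \<Longrightarrow> i < length e \<Longrightarrow> openin Y (VV i (e!i))"
proof -
  assume "thr e" "i < length e"
  then have "e!i \<subseteq> A i" using thr_A by blast
  then show ?thesis unfolding VV_def by (intro s0 UU_open)
qed

lemma length_vl[simp]: "length (vl e) = length e" unfolding vl_def by simp
lemma nth_vl: "i < length e \<Longrightarrow> vl e ! i = VV i (e!i)" unfolding vl_def by simp

lemma last_vl: "length e = Suc n \<Longrightarrow> last (vl e) = VV n (e!n)"
proof -
  assume l: "length e = Suc n"
  then have "vl e \<noteq> []" by (metis length_vl list.size(3) nat.distinct(1))
  then have "last (vl e) = vl e ! (length (vl e) - 1)" by (rule last_conv_nth)
  then show ?thesis using l nth_vl[of n e] by simp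
qed

lemma thr_par: "thr e \<Longrightarrow> Suc i < length e \<Longrightarrow> \<beta> \<in> e!Suc i \<Longrightarrow> \<pi> i \<beta> \<in> e!i"
proof -
  assume t: "thr e" and i: "Suc i < length e" and b: "\<beta> \<in> e!Suc i"
  have "ok (take (Suc i) e) (e!Suc i)" using t i unfolding thr_def by blast
  moreover have "length (take (Suc i) e) = Suc i" using i by simp
  moreover have "last (take (Suc i) e) = e!i" using i by (simp add: take_Suc_conv_app_nth)
  moreover have "take (Suc i) e \<noteq> []" using i by (cases e) auto
  moreover have "take (Suc i) e \<noteq> [] \<longrightarrow> (\<forall>\<beta>\<in>e!Suc i. \<pi> (length (take (Suc i) e) - 1) \<beta> \<in> last (take (Suc i) e))"
    using \<open>ok (take (Suc i) e) (e!Suc i)\<close> unfolding ok_def by (rule conjunct2[THEN conjunct2])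
  ultimately have "\<forall>\<beta>\<in>e!Suc i. \<pi> i \<beta> \<in> e!i" by simp
  then show ?thesis using b by blast
qed

lemma thr_VV_mono: "thr e \<Longrightarrow> Suc i < length e \<Longrightarrow> VV (Suc i) (e!Suc i) \<subseteq> VV i (e!i)"
proof -
  assume t: "thr e" and i: "Suc i < length e"
  have A1: "e!Suc i \<subseteq> A (Suc i)" using thr_A[OF t i] by blast
  have A0: "e!i \<subseteq> A i" using thr_A[OF t, of i] i by simp
  have "UU (Suc i) (e!Suc i) \<subseteq> UU i (e!i)"
  proof
    fix x assume "x \<in> UU (Suc i) (e!Suc i)"
    then obtain \<beta> where b: "\<beta> \<in> e!Suc i" "x \<in> U (Suc i) \<beta>" unfolding UU_def by blast
    have "\<pi> i \<beta> \<in> e!i" using thr_par[OF t i b(1)] .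
    moreover have "x \<in> U i (\<pi> i \<beta>)" using Usub[of \<beta> i] b A1 by blast
    ultimately show "x \<in> UU i (e!i)" unfolding UU_def by blast
  qed
  then show ?thesis unfolding VV_def by (rule s3[OF UU_open[OF A1] UU_open[OF A0]])
qed

lemma thr_take: "thr e \<Longrightarrow> thr (take k e)"
  unfolding thr_def by (simp add: min_def)

lemma canon_take: "canon e \<Longrightarrow> canon (take k e)"
  unfolding canon_def by (simp add: min_def)

lemma vl_take: "vl (take k e) = take k (vl e)"
  by (rule nth_equalityI) (auto simp: nth_vl)

lemma step_ex:
  assumes t: "thr e" and y: "y \<in> (if e = [] then topspace Y else VV (length e - 1) (last e))"
  shows "\<exists>E. ok e E \<and> y \<in> VV (length e) E"
proof (cases "e = []")
  case True
  then have y: "y \<in> s (topspace X)" using y s2 by simp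
  have oT: "openin X (topspace X)" by simp
  have c1: "\<forall>W\<in>U 0 ` A 0. openin X W" using Uopen by blast
  have eq: "\<Union>(U 0 ` A 0) = topspace X" using Ucover[of 0] by (simp add: Setcompr_eq_image)
  have "\<Union>{K. compactin X K \<and> K \<subseteq> topspace X \<and> y \<in> F K} \<subseteq> topspace X" by blast
  then have c2: "\<Union>{K. compactin X K \<and> K \<subseteq> topspace X \<and> y \<in> F K} \<subseteq> \<Union>(U 0 ` A 0)" using eq by simp
  obtain \<E> where \<E>: "finite \<E>" "\<E> \<subseteq> U 0 ` A 0" "y \<in> s (\<Union>\<E>)"
    using s4[OF oT y c1 c2] by blast
  then obtain E where E: "E \<subseteq> A 0" "finite E" "\<E> = U 0 ` E" by (meson finite_subset_image)
  have "ok e E" unfolding ok_def using True E by simp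
  moreover have "y \<in> VV (length e) E" unfolding VV_def UU_def using True E \<E> by simp
  ultimately show ?thesis by blast
next
  case False
  define n where "n = length e - 1"
  have ln: "length e = Suc n" using False unfolding n_def by (cases e) auto
  have le: "last e = e!n" using False ln by (simp add: last_conv_nth)
  have LA: "finite (e!n) \<and> e!n \<subseteq> A n" using thr_A[OF t] ln by simp
  have y: "y \<in> s (UU n (e!n))" using y False le unfolding VV_def n_def[symmetric] by simp
  have oU: "openin X (UU n (e!n))" using UU_open LA by blast
  define C where "C = {\<beta> \<in> A (Suc n). \<pi> n \<beta> \<in> e!n}"
  have c1: "\<forall>W\<in>U (Suc n) ` C. openin X W" using Uopen unfolding C_def by blast
  have c0: "UU n (e!n) \<subseteq> \<Union>(U (Suc n) ` C)"
  proof
    fix x assume "x \<in> UU n (e!n)"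
    then obtain \<alpha> where a: "\<alpha> \<in> e!n" "x \<in> U n \<alpha>" unfolding UU_def by blast
    then have "\<alpha> \<in> A n" using LA by blast
    then have "x \<in> \<Union>{U (Suc n) \<beta> | \<beta>. \<beta> \<in> A (Suc n) \<and> \<pi> n \<beta> = \<alpha>}" using Uunion a(2) by simp
    then obtain \<beta> where "\<beta> \<in> A (Suc n)" "\<pi> n \<beta> = \<alpha>" "x \<in> U (Suc n) \<beta>" by blast
    then show "x \<in> \<Union>(U (Suc n) ` C)" unfolding C_def using a(1) by blast
  qed
  have "\<Union>{K. compactin X K \<and> K \<subseteq> UU n (e!n) \<and> y \<in> F K} \<subseteq> UU n (e!n)" by blast
  then have c2: "\<Union>{K. compactin X K \<and> K \<subseteq> UU n (e!n) \<and> y \<in> F K} \<subseteq> \<Union>(U (Suc n) ` C)" using c0 by (rule order_trans)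
  obtain \<E> where \<E>: "finite \<E>" "\<E> \<subseteq> U (Suc n) ` C" "y \<in> s (\<Union>\<E>)"
    using s4[OF oU y c1 c2] by blast
  then obtain E where E: "E \<subseteq> C" "finite E" "\<E> = U (Suc n) ` E" by (meson finite_subset_image)
  have "ok e E" unfolding ok_def using False E ln le unfolding C_def by auto
  moreover have "y \<in> VV (length e) E" unfolding VV_def UU_def using ln E \<E> by simp
  ultimately show ?thesis by blast
qed

lemma ext_canon:
  assumes t: "thr e" and c: "canon e" and E: "ok e E"
  shows "thr (e @ [SOME E'. ok e E' \<and> VV (length e) E' = VV (length e) E]) \<and>
     canon (e @ [SOME E'. ok e E' \<and> VV (length e) E' = VV (length e) E]) \<and>
     VV (length e) (SOME E'. ok e E' \<and> VV (length e) E' = VV (length e) E) = VV (length e) E"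
    (is "thr (e @ [?cc]) \<and> canon (e @ [?cc]) \<and> ?V")
proof -
  define cc where "cc = ?cc"
  have cc: "ok e cc \<and> VV (length e) cc = VV (length e) E"
    unfolding cc_def by (rule someI[of _ E]) (use E in simp)
  have "thr (e @ [cc])" unfolding thr_def
  proof (intro allI impI)
    fix i assume "i < length (e @ [cc])"
    then consider "i < length e" | "i = length e" by fastforce
    then show "ok (take i (e @ [cc])) ((e @ [cc]) ! i)"
    proof cases
      case 1 then show ?thesis using t unfolding thr_def by (simp add: nth_append)
    next
      case 2 then show ?thesis using cc by simp
    qed
  qed
  moreover have "canon (e @ [cc])" unfolding canon_def
  proof (intro allI impI)
    fix i assume "i < length (e @ [cc])"
    then consider "i < length e" | "i = length e" by fastforce
    then show "(e @ [cc]) ! i = (SOME E. ok (take i (e @ [cc])) E \<and> VV i E = VV i ((e @ [cc]) ! i))"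
    proof cases
      case 1 then show ?thesis using c unfolding canon_def by (simp add: nth_append)
    next
      case 2 then show ?thesis using cc unfolding cc_def by simp
    qed
  qed
  ultimately show ?thesis using cc unfolding cc_def by blast
qed

lemma canon_inj:
  assumes c: "canon e" "canon e'" and l: "length e = length e'" and v: "vl e = vl e'"
  shows "e = e'"
proof -
  have VVeq: "i < length e \<Longrightarrow> VV i (e!i) = VV i (e'!i)" for i
    using nth_vl[of i e] nth_vl[of i e'] v l by simp
  have "i \<le> length e \<Longrightarrow> take i e = take i e'" for i
  proof (induction i)
    case 0 then show ?case by simp
  next
    case (Suc i)
    then have i: "i < length e" by simp
    have "e!i = (SOME E. ok (take i e) E \<and> VV i E = VV i (e!i))" using c(1) i unfolding canon_def by blast
    also have "\<dots> = (SOME E. ok (take i e') E \<and> VV i E = VV i (e'!i))" using Suc.IH i VVeq[OF i] by simp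
    also have "\<dots> = e'!i" using c(2) i l unfolding canon_def by simp
    finally have "e!i = e'!i" .
    then show ?case using Suc.IH i l by (simp add: take_Suc_conv_app_nth)
  qed
  then have "take (length e) e = take (length e) e'" by blast
  then show ?thesis using l by simp
qed

lemma exists_thread: "y \<in> topspace Y \<Longrightarrow> \<exists>e. length e = Suc n \<and> thr e \<and> canon e \<and> y \<in> VV n (e!n)"
proof (induction n)
  case 0
  have "thr []" "canon []" unfolding thr_def canon_def by simp_all
  obtain E where E: "ok [] E" "y \<in> VV 0 E" using step_ex[OF \<open>thr []\<close>, of y] 0 by auto
  define cc where "cc = (SOME E'. ok [] E' \<and> VV (length ([]::'i set list)) E' = VV (length ([]::'i set list)) E)"
  have "thr ([] @ [cc]) \<and> canon ([] @ [cc]) \<and> VV (length ([]::'i set list)) cc = VV (length ([]::'i set list)) E"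
    unfolding cc_def by (rule ext_canon[OF \<open>thr []\<close> \<open>canon []\<close> E(1)])
  then show ?case using E(2) by (intro exI[of _ "[cc]"]) simp
next
  case (Suc n)
  then obtain e where e: "length e = Suc n" "thr e" "canon e" "y \<in> VV n (e!n)" by blast
  have ne: "e \<noteq> []" using e(1) by auto
  then have le: "last e = e!n" using e(1) by (simp add: last_conv_nth)
  have yy: "y \<in> (if e = [] then topspace Y else VV (length e - 1) (last e))" using ne le e(1,4) by simp
  obtain E where E: "ok e E" "y \<in> VV (length e) E" using step_ex[OF e(2) yy] by blast
  define cc where "cc = (SOME E'. ok e E' \<and> VV (length e) E' = VV (length e) E)"
  have "thr (e @ [cc]) \<and> canon (e @ [cc]) \<and> VV (length e) cc = VV (length e) E"
    unfolding cc_def by (rule ext_canon[OF e(2,3) E(1)])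
  moreover have "(e @ [cc]) ! Suc n = cc" using e(1) by (simp add: nth_append)
  ultimately show ?case using E(2) e(1) by (intro exI[of _ "e @ [cc]"]) simp
qed

lemma sieve_Y: "is_sieve Y A' (\<lambda>n l. last l) (\<lambda>n l. butlast l)"
  unfolding is_sieve_def
proof (intro conjI allI ballI)
  fix n l assume "l \<in> A' n"
  then obtain e where e: "l = vl e" "length e = Suc n" "thr e" "canon e" unfolding A'_def by blast
  have "last l = VV n (e!n)" using e last_vl by simp
  then show "openin Y (last l)" using thr_open[OF e(3), of n] e(2) by simp
next
  fix n
  show "\<Union>{last l |l. l \<in> A' n} = topspace Y"
  proof
    show "\<Union>{last l |l. l \<in> A' n} \<subseteq> topspace Y"
    proof
      fix y assume "y \<in> \<Union>{last l |l. l \<in> A' n}"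
      then obtain l where l: "l \<in> A' n" "y \<in> last l" by blast
      then obtain e where e: "l = vl e" "length e = Suc n" "thr e" "canon e" unfolding A'_def by blast
      have "last l = VV n (e!n)" using e last_vl by simp
      then show "y \<in> topspace Y" using l(2) openin_subset[OF thr_open[OF e(3), of n]] e(2) by auto
    qed
  next
    show "topspace Y \<subseteq> \<Union>{last l |l. l \<in> A' n}"
    proof
      fix y assume "y \<in> topspace Y"
      then obtain e where e: "length e = Suc n" "thr e" "canon e" "y \<in> VV n (e!n)"
        using exists_thread by blast
      have "vl e \<in> A' n" unfolding A'_def using e by blast
      moreover have "last (vl e) = VV n (e!n)" using e last_vl by simp
      ultimately show "y \<in> \<Union>{last l |l. l \<in> A' n}" using e(4) by blast
    qed
  qed
next
  fix n l assume "l \<in> A' (Suc n)"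
  then obtain e where e: "l = vl e" "length e = Suc (Suc n)" "thr e" "canon e" unfolding A'_def by blast
  have "butlast l = vl (take (Suc n) e)" using e(1,2) by (simp add: vl_take butlast_conv_take)
  moreover have "length (take (Suc n) e) = Suc n" using e(2) by simp
  ultimately show "butlast l \<in> A' n" unfolding A'_def using thr_take[OF e(3)] canon_take[OF e(4)] by blast
next
  fix n l assume "l \<in> A' n"
  then obtain e where e: "l = vl e" "length e = Suc n" "thr e" "canon e" unfolding A'_def by blast
  have ll: "last l = VV n (e!n)" using e last_vl by simp
  show "last l = \<Union>{last l' |l'. l' \<in> A' (Suc n) \<and> butlast l' = l}"
  proof
    show "last l \<subseteq> \<Union>{last l' |l'. l' \<in> A' (Suc n) \<and> butlast l' = l}"
    proof
      fix y assume y: "y \<in> last l"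
      have ne: "e \<noteq> []" using e(2) by auto
      then have le: "last e = e!n" using e(2) by (simp add: last_conv_nth)
      have yy: "y \<in> (if e = [] then topspace Y else VV (length e - 1) (last e))" using ne le e(2) y ll by simp
      obtain E where E: "ok e E" "y \<in> VV (length e) E" using step_ex[OF e(3) yy] by blast
      define cc where "cc = (SOME E'. ok e E' \<and> VV (length e) E' = VV (length e) E)"
      have cc: "thr (e @ [cc]) \<and> canon (e @ [cc]) \<and> VV (length e) cc = VV (length e) E"
        unfolding cc_def by (rule ext_canon[OF e(3,4) E(1)])
      have "vl (e @ [cc]) \<in> A' (Suc n)" unfolding A'_def using cc e(2) by (intro CollectI exI[of _ "e @ [cc]"]) simp
      moreover have "butlast (vl (e @ [cc])) = l"
        using vl_take[of "length e" "e @ [cc]"] e(1) by (simp add: butlast_conv_take)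
      moreover have "last (vl (e @ [cc])) = VV (Suc n) cc"
        using last_vl[of "e @ [cc]" "Suc n"] e(2) by (simp add: nth_append)
      ultimately show "y \<in> \<Union>{last l' |l'. l' \<in> A' (Suc n) \<and> butlast l' = l}"
        using cc E(2) e(2) by auto
    qed
  next
    show "\<Union>{last l' |l'. l' \<in> A' (Suc n) \<and> butlast l' = l} \<subseteq> last l"
    proof
      fix y assume "y \<in> \<Union>{last l' |l'. l' \<in> A' (Suc n) \<and> butlast l' = l}"
      then obtain l' where l': "l' \<in> A' (Suc n)" "butlast l' = l" "y \<in> last l'" by blast
      then obtain e' where e': "l' = vl e'" "length e' = Suc (Suc n)" "thr e'" "canon e'" unfolding A'_def by blast
      have "last l' = VV (Suc n) (e'!Suc n)" using e'(1,2) last_vl by simp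
      then have y1: "y \<in> VV n (e'!n)" using thr_VV_mono[OF e'(3), of n] e'(2) l'(3) by auto
      have "l = vl (take (Suc n) e')" using l'(2) e'(1,2) by (simp add: vl_take butlast_conv_take)
      then have "last l = VV n (e'!n)" using e'(2) last_vl[of "take (Suc n) e'" n] by simp
      then show "y \<in> last l" using y1 by simp
    qed
  qed
qed

lemma complete_Y: "is_complete_sieve Y A' (\<lambda>n l. last l) (\<lambda>n l. butlast l)"
  unfolding is_complete_sieve_def
proof (intro conjI sieve_Y allI impI)
  fix \<alpha> \<B>
  assume th: "\<forall>n. \<alpha> n \<in> A' n \<and> butlast (\<alpha> (Suc n)) = \<alpha> n"
    and fbm: "filter_base_on Y \<B> \<and> (\<forall>B\<in>\<B>. \<forall>n. B \<inter> last (\<alpha> n) \<noteq> {})"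
  have "\<forall>n. \<exists>e. \<alpha> n = vl e \<and> length e = Suc n \<and> thr e \<and> canon e" using th unfolding A'_def by blast
  then obtain ee where ee: "\<And>n. \<alpha> n = vl (ee n) \<and> length (ee n) = Suc n \<and> thr (ee n) \<and> canon (ee n)"
    by metis
  have coh: "take (Suc n) (ee (Suc n)) = ee n" for n
  proof (rule canon_inj)
    show "canon (take (Suc n) (ee (Suc n)))" using ee canon_take by blast
    show "canon (ee n)" using ee by blast
    show "length (take (Suc n) (ee (Suc n))) = length (ee n)" using ee[of n] ee[of "Suc n"] by simp
    have "vl (take (Suc n) (ee (Suc n))) = butlast (vl (ee (Suc n)))"
      using ee[of "Suc n"] by (simp add: vl_take butlast_conv_take)
    then show "vl (take (Suc n) (ee (Suc n))) = vl (ee n)" using th ee by metis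
  qed
  define E where "E n = ee n ! n" for n
  have Esuc: "ee (Suc n) ! n = E n" for n
    using coh[of n] unfolding E_def by (metis lessI nth_take)
  have ftE: "ft E" unfolding ft_def
  proof (intro allI conjI ballI)
    fix n
    show "finite (E n)" "E n \<subseteq> A n" using thr_A[of "ee n" n] ee[of n] unfolding E_def by auto
  next
    fix n \<beta> assume "\<beta> \<in> E (Suc n)"
    then show "\<pi> n \<beta> \<in> E n"
      using thr_par[of "ee (Suc n)" n \<beta>] ee[of "Suc n"] Esuc[of n] unfolding E_def by auto
  qed
  have "last (\<alpha> n) = s (UU n (E n))" for n
    using ee[of n] last_vl[of "ee n" n] unfolding E_def VV_def by simp
  then have "\<forall>B\<in>\<B>. \<forall>n. B \<inter> s (UU n (E n)) \<noteq> {}" using fbm by simp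
  then show "\<exists>x\<in>topspace Y. \<forall>B\<in>\<B>. x \<in> Y closure_of B" using mainY[OF ftE] fbm by blast
qed

end


theorem corollary3p6:
  fixes X :: "'a topology" and Y :: "'b topology"
    and F :: "'a set \<Rightarrow> 'b set"
    and A :: "nat \<Rightarrow> 'i set" and U :: "nat \<Rightarrow> 'i \<Rightarrow> 'a set" and \<pi> :: "nat \<Rightarrow> 'i \<Rightarrow> 'i"
  assumes "completely_regular_space X" and "completely_regular_space Y"
    and "is_complete_sieve X A U \<pi>"
    and "maps_compacts X Y F"
    and "usc_compact_map X Y F"
    and "set_tri_quotient X Y F"
  shows "sieve_complete Y"
proof -
  from assms(6)[unfolded set_tri_quotient_def] obtain s :: "'a set \<Rightarrow> 'b set" where sc:
     "(\<forall>U. openin X U \<longrightarrow> openin Y (s U)) \<and>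
        (\<forall>U. openin X U \<longrightarrow> s U \<subseteq> \<Union>{F K | K. compactin X K \<and> K \<subseteq> U}) \<and>
        s (topspace X) = topspace Y \<and>
        (\<forall>U V. openin X U \<and> openin X V \<and> U \<subseteq> V \<longrightarrow> s U \<subseteq> s V) \<and>
        (\<forall>U y \<W>. openin X U \<and> y \<in> s U \<and> (\<forall>W\<in>\<W>. openin X W) \<and>
            \<Union>{K. compactin X K \<and> K \<subseteq> U \<and> y \<in> F K} \<subseteq> \<Union>\<W> \<longrightarrow>
            (\<exists>\<E>. finite \<E> \<and> \<E> \<subseteq> \<W> \<and> y \<in> s (\<Union>\<E>)))" ..
  note sc1 = sc[THEN conjunct1]
  note sc2 = sc[THEN conjunct2, THEN conjunct1]
  note sc3 = sc[THEN conjunct2, THEN conjunct2, THEN conjunct1]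
  note sc4 = sc[THEN conjunct2, THEN conjunct2, THEN conjunct2, THEN conjunct1]
  note sc5 = sc[THEN conjunct2, THEN conjunct2, THEN conjunct2, THEN conjunct2]
  have T: "tq X Y F A U \<pi> s"
  proof (unfold_locales)
    show "regular_space X" using assms(1) by (rule completely_regular_imp_regular_space)
    show "is_complete_sieve X A U \<pi>" by (rule assms(3))
    show "maps_compacts X Y F" by (rule assms(4))
    show "usc_compact_map X Y F" by (rule assms(5))
    show "s (topspace X) = topspace Y" by (rule sc3)
  next
    fix V assume "openin X V" then show "openin Y (s V)" using sc1 by blast
  next
    fix V assume "openin X V" then show "s V \<subseteq> \<Union>{F K | K. compactin X K \<and> K \<subseteq> V}" using sc2 by blast
  next
    fix V W assume "openin X V" "openin X W" "V \<subseteq> W" then show "s V \<subseteq> s W" using sc4 by blast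
  next
    fix V y \<W> assume h: "openin X V" "y \<in> s V" "\<forall>W\<in>\<W>. openin X W"
      "\<Union>{K. compactin X K \<and> K \<subseteq> V \<and> y \<in> F K} \<subseteq> \<Union>\<W>"
    show "\<exists>\<E>. finite \<E> \<and> \<E> \<subseteq> \<W> \<and> y \<in> s (\<Union>\<E>)"
      using sc5[rule_format, OF conjI[OF h(1) conjI[OF h(2) conjI[OF h(3) h(4)]]]] .
  qed
  show ?thesis unfolding sieve_complete_def using tq.complete_Y[OF T] by blast
qed

end
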